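(* Let $\sigma$ be a valid composite state of $\mathcal{M}uddy\mathcal{P}uzzle$ reachable by a valid trace from a composite initial state $\sigma^0$ with $\mathbf{consistent}(\sigma^0)$, and suppose $\sigma\notin S_F$. Then there exist a component $i$ and a valid transition (labeled $(i,l)$ for some $l$) from $\sigma$ to a state $\sigma'$ such that $\mathit{round}(\sigma'_i)>\mathit{round}(\sigma_i)$.
   Context: Fix $n \ge 1$ children indexed $1,\dots,n$. A message is a triple $\langle j, r, s\rangle$ with $j \in \{1,\dots,n\}$ (the sender), $r \in \mathbb{N}$ (a round number) and $s \in \{u,m,c\}$ (epistemic status: $u$ = "does not know own status", $m$ = "knows they are muddy", $c$ = "knows they are clean"); $\bot$ denotes "no message". Child $i$ is a VLSM $\mathcal{C}_i$ with labels $\{\mathit{init},\mathit{emit},\mathit{receive}\}$, no initial messages, initial states $\langle \mathit{Obs}\rangle$ with $\mathit{Obs}\subseteq\{1,\dots,n\}$, and running states $\langle \mathit{Obs}, r, s\rangle$ with $\mathit{Obs}\subseteq\{1,\dots,n\}$, $r\in\mathbb{N}$, $s\in\{u,m,c\}$; $\mathit{Obs}(\cdot)$ denotes the observation set of either kind of state. Transitions $\tau_i$ and local validity $\beta_i$: - init: enabled only on an initial state $\langle\mathit{Obs}\rangle$ with input $\bot$; goes to $\langle \mathit{Obs},0,u\rangle$ if $\mathit{Obs}\ne\emptyset$ and to $\langle\mathit{Obs},0,m\rangle$ if $\mathit{Obs}=\emptyset$; output $\bot$. - emit: enabled only on a running state $\langle\mathit{Obs},r,s\rangle$ with input $\bot$;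 state unchanged, output $\langle i,r,s\rangle$. - receive: on a running state $\langle\mathit{Obs},r,s\rangle$ with input message $\langle j,r',s'\rangle$, output $\bot$, new state given by the first applicable case: (R1) $s\in\{m,c\}$: unchanged. Otherwise $s=u$ and: (R2) $s'=c$, $j\notin\mathit{Obs}$, $r'=|\mathit{Obs}|$: $\langle\mathit{Obs},r',c\rangle$; (R3) $s'=c$, $j\notin\mathit{Obs}$, $r'=|\mathit{Obs}|+1$: $\langle\mathit{Obs},r'-1,m\rangle$; (R4) $s'=m$, $j\in\mathit{Obs}$, $r'=|\mathit{Obs}|$: $\langle\mathit{Obs},r',m\rangle$; (R5) $s'=m$, $j\in\mathit{Obs}$, $r'=|\mathit{Obs}|-1$: $\langle\mathit{Obs},r'+1,c\rangle$; (R6) $s'=u$, $j\in\mathit{Obs}$, $r'<r$: unchanged; (R7) $s'=u$, $j\in\mathit{Obs}$, $r\le r'<|\mathit{Obs}|-1$: $\langle\mathit{Obs},r'+1,u\rangle$; (R8) $s'=u$, $j\in\mathit{Obs}$, $r'=|\mathit{Obs}|-1$: $\langle\mathit{Obs},r'+1,m\rangle$; (R9) $s'=u$, $j\notin\mathit{Obs}$, $r'\le r$: unchanged; (R10) $s'=u$, $j\notin\mathit{Obs}$, $r<r'<|\mathit{Obs}|$: $\langle\mathit{Obs},r',u\rangle$; (R11) $s'=u$, $j\notin\mathit{Obs}$, $r'=|\mathit{Obs}|$: $\langle\mathit{Obs},r',m\rangle$. $\beta_i$ for receive holds exactly when one of (R1)–(R11) applies. Composition $\mathcal{M}uddy\mathcal{P}uzzle=(\mathcal{C}_1+\dots+\mathcal{C}_n)|_\varphi$: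 composite states are tuples $\sigma=(\sigma_1,\dots,\sigma_n)$; composite initial states ($S_0$) are those with every component initial; labels are pairs $(i,l)$; transition $(i,l)$ with input $\mu$ applies $\tau_i(l,\sigma_i,\mu)$ to component $i$, leaves the others unchanged, and is allowed iff $\beta_i(l,\sigma_i,\mu)\wedge\varphi((i,l),\sigma,\mu)$. For a composite state $\sigma$ let $M=\bigcup_{i}\mathit{Obs}(\sigma_i)$; $\mathbf{consistent}(\sigma)$ means $M\ne\emptyset$ and $\mathit{Obs}(\sigma_i)=M\setminus\{i\}$ for all $i$. The composition constraint: $\varphi((i,\mathit{init}),\sigma,\mu)=\mathbf{consistent}(\sigma)$; $\varphi((i,\mathit{emit}),\sigma,\mu)=\text{true}$; $\varphi((i,\mathit{receive}),\sigma,\langle j,r',s'\rangle)$ holds iff $\sigma_j$ is a running state $\langle \mathit{Obs}_j,r_j,s_j\rangle$ and $(s'=s_j\wedge r'=r_j)\vee(s'=u\wedge r'<r_j)$. Validity (VLSM sense): a transition is constrained if its input satisfies the constraint. Valid traces and valid messages are defined by simultaneous induction: a valid trace is a finite sequence of constrained transitions starting in a composite initial state in which every input message is either $\bot$ or a valid message; a valid message is one output by some transition of some valid trace. A valid state is one reachable by a valid trace; a valid transition is a constrained transition from a valid state whose input is $\bot$ or a valid message. $S_V$ is the set of valid states. The set of final states is $S_F=\{\sigma\in S_V \mid$ every component $\sigma_i$ is a running state with status $\ne u\}$. For a child state, $\mathit{round}(\langle\mathit{Obs}\rangle)=-1$ and $\mathit{round}(\langle\mathit{Obs},r,s\rangle)=r$.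 *)

theory Defs
  imports Main
begin

datatype status = U | Mu | Cl   (* u: unknown, m: knows muddy, c: knows clean *)

type_synonym msg = "nat \<times> nat \<times> status"

datatype cstate = Init "nat set" | Run "nat set" nat status

datatype label = LInit | LEmit | LReceive

fun obs :: "cstate \<Rightarrow> nat set" where
  "obs (Init Ob) = Ob"
| "obs (Run Ob r s) = Ob"

fun round :: "cstate \<Rightarrow> int" where
  "round (Init Ob) = -1"
| "round (Run Ob r s) = int r"

(* receive: cases R1--R11 (first applicable); None iff no case applies (beta false) *)
fun recv :: "nat set \<Rightarrow> nat \<Rightarrow> status \<Rightarrow> msg \<Rightarrow> cstate option" where
  "recv Ob r s (j, r', s') =
    (if s = Mu \<or> s = Cl then Some (Run Ob r s)
     else if s' = Cl \<and> j \<notin> Ob \<and> r' = card Ob then Some (Run Ob r' Cl)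
     else if s' = Cl \<and> j \<notin> Ob \<and> r' = card Ob + 1 then Some (Run Ob (r' - 1) Mu)
     else if s' = Mu \<and> j \<in> Ob \<and> r' = card Ob then Some (Run Ob r' Mu)
     else if s' = Mu \<and> j \<in> Ob \<and> int r' = int (card Ob) - 1 then Some (Run Ob (r' + 1) Cl)
     else if s' = U \<and> j \<in> Ob \<and> r' < r then Some (Run Ob r s)
     else if s' = U \<and> j \<in> Ob \<and> r \<le> r' \<and> int r' < int (card Ob) - 1 then Some (Run Ob (r' + 1) U)
     else if s' = U \<and> j \<in> Ob \<and> int r' = int (card Ob) - 1 then Some (Run Ob (r' + 1) Mu)
     else if s' = U \<and> j \<notin> Ob \<and> r' \<le> r then Some (Run Ob r s)
     else if s' = U \<and> j \<notin> Ob \<and> r < r' \<and> r' < card Ob then Some (Run Ob r' U)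
     else if s' = U \<and> j \<notin> Ob \<and> r' = card Ob then Some (Run Ob r' Mu)
     else None)"

(* transition tau_i of child i, defined exactly when beta_i holds;
   result = (new state, output), None = transition not enabled / beta false *)
fun child_step :: "nat \<Rightarrow> label \<Rightarrow> cstate \<Rightarrow> msg option \<Rightarrow> (cstate \<times> msg option) option" where
  "child_step i LInit (Init Ob) None = Some (Run Ob 0 (if Ob = {} then Mu else U), None)"
| "child_step i LEmit (Run Ob r s) None = Some (Run Ob r s, Some (i, r, s))"
| "child_step i LReceive (Run Ob r s) (Some m) = map_option (\<lambda>st. (st, None)) (recv Ob r s m)"
| "child_step i l st \<mu> = None"

(* composite states: functions nat => cstate; only components 1..n are meaningful,
   the others are fixed to Init {} *)
type_synonym cstate_comp = "nat \<Rightarrow> cstate"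

definition is_msg :: "nat \<Rightarrow> msg \<Rightarrow> bool" where
  "is_msg n m \<longleftrightarrow> fst m \<in> {1..n}"

definition comp_initial :: "nat \<Rightarrow> cstate_comp \<Rightarrow> bool" where
  "comp_initial n \<sigma> \<longleftrightarrow>
     (\<forall>i\<in>{1..n}. \<exists>Ob. Ob \<subseteq> {1..n} \<and> \<sigma> i = Init Ob) \<and>
     (\<forall>i. i \<notin> {1..n} \<longrightarrow> \<sigma> i = Init {})"

definition consistent :: "nat \<Rightarrow> cstate_comp \<Rightarrow> bool" where
  "consistent n \<sigma> \<longleftrightarrow>
     (let M = (\<Union>i\<in>{1..n}. obs (\<sigma> i)) in M \<noteq> {} \<and> (\<forall>i\<in>{1..n}. obs (\<sigma> i) = M - {i}))"

fun phi :: "nat \<Rightarrow> nat \<Rightarrow> label \<Rightarrow> cstate_comp \<Rightarrow> msg option \<Rightarrow> bool" where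
  "phi n i LInit \<sigma> \<mu> = consistent n \<sigma>"
| "phi n i LEmit \<sigma> \<mu> = True"
| "phi n i LReceive \<sigma> None = False"
| "phi n i LReceive \<sigma> (Some (j, r', s')) =
     (j \<in> {1..n} \<and> (\<exists>Obj rj sj. \<sigma> j = Run Obj rj sj \<and>
        ((s' = sj \<and> r' = rj) \<or> (s' = U \<and> r' < rj))))"

definition comp_step :: "nat \<Rightarrow> nat \<Rightarrow> label \<Rightarrow> cstate_comp \<Rightarrow> msg option
                         \<Rightarrow> (cstate_comp \<times> msg option) option" where
  "comp_step n i l \<sigma> \<mu> =
     (if i \<in> {1..n} \<and> (\<forall>m. \<mu> = Some m \<longrightarrow> is_msg n m) \<and> phi n i l \<sigma> \<mu> then
        map_option (\<lambda>(st, out). (\<sigma>(i := st), out)) (child_step i l (\<sigma> i) \<mu>)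
      else None)"

(* valid traces (as reachability from a given initial state) and valid messages,
   by simultaneous induction *)
inductive reach :: "nat \<Rightarrow> cstate_comp \<Rightarrow> cstate_comp \<Rightarrow> bool"
  and valid_msg :: "nat \<Rightarrow> msg \<Rightarrow> bool" where
  reach_init: "comp_initial n \<sigma>0 \<Longrightarrow> reach n \<sigma>0 \<sigma>0"
| reach_step: "\<lbrakk> reach n \<sigma>0 \<sigma>; \<mu> = None \<or> (\<exists>m. \<mu> = Some m \<and> valid_msg n m);
                 comp_step n i l \<sigma> \<mu> = Some (\<sigma>', out) \<rbrakk> \<Longrightarrow> reach n \<sigma>0 \<sigma>'"
| valid_out: "\<lbrakk> reach n \<sigma>0 \<sigma>; \<mu> = None \<or> (\<exists>m. \<mu> = Some m \<and> valid_msg n m);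
                 comp_step n i l \<sigma> \<mu> = Some (\<sigma>', Some m') \<rbrakk> \<Longrightarrow> valid_msg n m'"

definition valid_state :: "nat \<Rightarrow> cstate_comp \<Rightarrow> bool" where
  "valid_state n \<sigma> \<longleftrightarrow> (\<exists>\<sigma>0. reach n \<sigma>0 \<sigma>)"

definition final_states :: "nat \<Rightarrow> cstate_comp set" where
  "final_states n = {\<sigma>. valid_state n \<sigma> \<and>
       (\<forall>i\<in>{1..n}. \<exists>Ob r s. \<sigma> i = Run Ob r s \<and> s \<noteq> U)}"

definition valid_transition :: "nat \<Rightarrow> nat \<Rightarrow> label \<Rightarrow> cstate_comp \<Rightarrow> cstate_comp \<Rightarrow> bool" where
  "valid_transition n i l \<sigma> \<sigma>' \<longleftrightarrow> valid_state n \<sigma> \<and>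
     (\<exists>\<mu> out. (\<mu> = None \<or> (\<exists>m. \<mu> = Some m \<and> valid_msg n m)) \<and>
              comp_step n i l \<sigma> \<mu> = Some (\<sigma>', out))"

end

theory Submission imports Defs begin

definition P :: "nat set \<Rightarrow> nat \<Rightarrow> nat \<Rightarrow> status \<Rightarrow> bool" where
 "P M i r s \<longleftrightarrow> (if i \<in> M then (s = U \<and> r + 2 \<le> card M) \<or> (s = Mu \<and> r + 1 = card M)
                 else (s = U \<and> r + 1 \<le> card M) \<or> (s = Cl \<and> r = card M))"

lemma recv_inv:
  assumes "recv (M - {i}) r s (j, r', s') = Some st" "finite M"
    "P M i r s" "P M j rj sj" "(s' = sj \<and> r' = rj) \<or> (s' = U \<and> r' < rj)"
    "j = i \<longrightarrow> rj = r \<and> sj = s"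
  shows "\<exists>r2 s2. st = Run (M - {i}) r2 s2 \<and> P M i r2 s2"
proof (cases "i \<in> M")
  case True
  then have c: "card (M - {i}) = card M - 1" using assms(2) by simp
  show ?thesis using assms(1,3-6) True unfolding P_def c
    by (auto split: if_splits)
next
  case False
  then have c: "card (M - {i}) = card M" using assms(2) by simp
  show ?thesis using assms(1,3-6) False unfolding P_def c
    by (auto split: if_splits)
qed

lemma recv_prog:
  assumes "finite M" "j \<in> M" "j \<noteq> i" "P M i r U" "P M j rj sj" "sj = U \<longrightarrow> r \<le> rj"
  shows "\<exists>st. recv (M - {i}) r U (j, rj, sj) = Some st \<and> round st > int r"
proof (cases "i \<in> M")
  case True
  then have c: "card (M - {i}) = card M - 1" using assms(1) by simp
  show ?thesis using assms(2-6) True unfolding P_def c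
    by (auto split: if_splits)
next
  case False
  then have c: "card (M - {i}) = card M" using assms(1) by simp
  show ?thesis using assms(2-6) False unfolding P_def c
    by (auto split: if_splits)
qed

lemma recv_obs: "recv Ob r s m = Some st \<Longrightarrow> obs st = Ob"
  by (cases m) (auto split: if_splits)

lemma child_obs: "child_step i l c \<mu> = Some (st, out) \<Longrightarrow> obs st = obs c"
  by (cases "(i, l, c, \<mu>)" rule: child_step.cases) (auto dest: recv_obs)

lemma reach_obs:
  "reach n \<sigma>0 \<sigma> \<Longrightarrow> (\<forall>i. obs (\<sigma> i) = obs (\<sigma>0 i)) \<and> comp_initial n \<sigma>0"
  and "valid_msg n m \<Longrightarrow> True"
proof (induction rule: reach_valid_msg.inducts)
  case (reach_step n \<sigma>0 \<sigma> \<mu> i l \<sigma>' out)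
  from \<open>comp_step n i l \<sigma> \<mu> = Some (\<sigma>', out)\<close> obtain st where st: "child_step i l (\<sigma> i) \<mu> = Some (st, out)" "\<sigma>' = \<sigma>(i := st)"
    by (auto simp: comp_step_def split: if_splits)
  have "obs st = obs (\<sigma> i)" using st(1) by (rule child_obs)
  then show ?case using reach_step.IH st(2) by auto
qed auto

definition invm :: "nat \<Rightarrow> nat set \<Rightarrow> cstate_comp \<Rightarrow> bool" where
 "invm n M \<sigma> \<longleftrightarrow> finite M \<and> M \<subseteq> {1..n} \<and> M \<noteq> {} \<and>
   (\<forall>i. i \<notin> {1..n} \<longrightarrow> \<sigma> i = Init {}) \<and>
   (\<forall>i\<in>{1..n}. obs (\<sigma> i) = M - {i} \<and> (\<forall>Ob r s. \<sigma> i = Run Ob r s \<longrightarrow> P M i r s))"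

lemma reach_inv:
  "reach n \<sigma>0 \<sigma> \<Longrightarrow> consistent n \<sigma>0 \<Longrightarrow> invm n (\<Union>i\<in>{1..n}. obs (\<sigma>0 i)) \<sigma>"
  and "valid_msg n m \<Longrightarrow> True"
proof (induction rule: reach_valid_msg.inducts)
  case (reach_init n \<sigma>0)
  define M where "M = (\<Union>i\<in>{1..n}. obs (\<sigma>0 i))"
  have ci: "\<forall>i\<in>{1..n}. \<exists>Ob. Ob \<subseteq> {1..n} \<and> \<sigma>0 i = Init Ob"
    "\<forall>i. i \<notin> {1..n} \<longrightarrow> \<sigma>0 i = Init {}" using reach_init(1) unfolding comp_initial_def by auto
  have co: "M \<noteq> {}" "\<forall>i\<in>{1..n}. obs (\<sigma>0 i) = M - {i}"
    using reach_init(2) unfolding consistent_def M_def[symmetric] Let_def by blast+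
  have sub: "M \<subseteq> {1..n}"
  proof
    fix x assume "x \<in> M"
    then obtain i where i: "i \<in> {1..n}" "x \<in> obs (\<sigma>0 i)" unfolding M_def by blast
    then obtain Ob where "Ob \<subseteq> {1..n}" "\<sigma>0 i = Init Ob" using ci(1) by blast
    then show "x \<in> {1..n}" using i(2) by auto
  qed
  then have fin: "finite M" by (rule finite_subset) simp
  have nr: "\<forall>i\<in>{1..n}. \<forall>Ob r s. \<sigma>0 i \<noteq> Run Ob r s"
  proof (intro ballI allI)
    fix i Ob r s assume "i \<in> {1..n}"
    then obtain Ob' where "\<sigma>0 i = Init Ob'" using ci(1) by blast
    then show "\<sigma>0 i \<noteq> Run Ob r s" by simp
  qed
  have "invm n M \<sigma>0" unfolding invm_def
  proof (intro conjI)
    show "\<forall>i\<in>{1..n}. obs (\<sigma>0 i) = M - {i} \<and> (\<forall>Ob r s. \<sigma>0 i = Run Ob r s \<longrightarrow> P M i r s)"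
      using co(2) nr by simp
  qed (use ci(2) co(1) sub fin in auto)
  then show ?case unfolding M_def .
next
  case (reach_step n \<sigma>0 \<sigma> \<mu> i l \<sigma>' out)
  define M where "M = (\<Union>i\<in>{1..n}. obs (\<sigma>0 i))"
  have I: "invm n M \<sigma>" using reach_step M_def by simp
  from \<open>comp_step n i l \<sigma> \<mu> = Some (\<sigma>', out)\<close> obtain st where st: "child_step i l (\<sigma> i) \<mu> = Some (st, out)" "\<sigma>' = \<sigma>(i := st)"
    and i: "i \<in> {1..n}" and ph: "phi n i l \<sigma> \<mu>"
    by (auto simp: comp_step_def split: if_splits)
  have fin: "finite M" and Mne: "M \<noteq> {}" and Msub: "M \<subseteq> {1..n}" using I by (auto simp: invm_def)
  have oi: "obs (\<sigma> i) = M - {i}" and Pi: "\<And>Ob r s. \<sigma> i = Run Ob r s \<Longrightarrow> P M i r s"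
    using I i by (auto simp: invm_def)
  have "obs st = M - {i} \<and> (\<forall>Ob r s. st = Run Ob r s \<longrightarrow> P M i r s)"
  proof (cases "(i, l, \<sigma> i, \<mu>)" rule: child_step.cases)
    case (1 i' Ob)
    have si: "\<sigma> i = Init Ob" and mu: "\<mu> = None" and l: "l = LInit" using 1 by auto
    have Ob: "Ob = M - {i}" using oi si by simp
    have stv: "st = Run Ob 0 (if Ob = {} then Mu else U)" using st(1) si mu l by simp
    show ?thesis
    proof (cases "Ob = {}")
      case True
      then have "M = {i}" using Ob Mne by auto
      then show ?thesis using stv True Ob by (simp add: P_def)
    next
      case False
      have c2: "card M \<ge> 2" if iM: "i \<in> M"
      proof -
        have "card (M - {i}) > 0" using False Ob fin by (simp add: card_gt_0_iff)
        then show ?thesis using iM fin by (simp add: card_Diff_singleton)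
      qed
      have c1: "card M \<ge> 1" using Mne fin by (simp add: Suc_le_eq card_gt_0_iff)
      show ?thesis using stv False Ob c1 c2 by (auto simp add: P_def)
    qed
  next
    case (2 i' Ob r s)
    then show ?thesis using st Pi oi by auto
  next
    case (3 i' Ob r s m)
    have si: "\<sigma> i = Run Ob r s" and mu: "\<mu> = Some m" and l: "l = LReceive" using 3 by auto
    obtain j r' s' where m: "m = (j, r', s')" by (cases m) auto
    have ph': "j \<in> {1..n} \<and> (\<exists>Obj rj sj. \<sigma> j = Run Obj rj sj \<and>
        ((s' = sj \<and> r' = rj) \<or> (s' = U \<and> r' < rj)))" using ph l mu m by simp
    then obtain Obj rj sj where j: "j \<in> {1..n}" "\<sigma> j = Run Obj rj sj"
      "(s' = sj \<and> r' = rj) \<or> (s' = U \<and> r' < rj)" by blast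
    have Pj: "P M j rj sj" using I j(1,2) unfolding invm_def by blast
    have Ob: "Ob = M - {i}" using oi si by simp
    have "map_option (\<lambda>st. (st, None)) (recv Ob r s m) = Some (st, out)"
      using st(1) si mu l by simp
    then have rc: "recv (M - {i}) r s (j, r', s') = Some st" using Ob m
      by (auto simp del: recv.simps)
    have ji: "j = i \<longrightarrow> rj = r \<and> sj = s" using si j(2) by auto
    from recv_inv[OF rc fin Pi[OF si] Pj j(3) ji]
    show ?thesis using Ob by (auto simp del: recv.simps)
  qed (use st in \<open>auto simp del: recv.simps\<close>)
  then show ?case using I i st(2) unfolding invm_def M_def[symmetric] by auto
qed auto


lemma emit_valid:
  assumes "reach n \<sigma>0 \<sigma>" "j \<in> {1..n}" "\<sigma> j = Run Ob r s"
  shows "valid_msg n (j, r, s)"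
proof -
  have "comp_step n j LEmit \<sigma> None = Some (\<sigma>(j := Run Ob r s), Some (j, r, s))"
    using assms(2,3) by (simp add: comp_step_def)
  then show ?thesis using valid_out[OF assms(1), of None] by blast
qed

theorem mainTheorem4:
  fixes n :: nat and \<sigma>0 \<sigma> :: cstate_comp
  assumes "n \<ge> 1"
    and "reach n \<sigma>0 \<sigma>"
    and "consistent n \<sigma>0"
    and "\<sigma> \<notin> final_states n"
  shows "\<exists>i l \<sigma>'. valid_transition n i l \<sigma> \<sigma>' \<and> round (\<sigma>' i) > round (\<sigma> i)"
proof -
  define M where "M = (\<Union>i\<in>{1..n}. obs (\<sigma>0 i))"
  have I: "invm n M \<sigma>" using reach_inv(1)[OF assms(2,3)] M_def by simp
  have fin: "finite M" and Mne: "M \<noteq> {}" and Msub: "M \<subseteq> {1..n}" using I by (auto simp: invm_def)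
  have ob: "\<forall>i. obs (\<sigma> i) = obs (\<sigma>0 i)" using reach_obs(1)[OF assms(2)] by blast
  have "consistent n \<sigma> = consistent n \<sigma>0" unfolding consistent_def using ob by simp
  then have cons: "consistent n \<sigma>" using assms(3) by simp
  have vs: "valid_state n \<sigma>" using assms(2) unfolding valid_state_def by blast
  have nf: "\<exists>i\<in>{1..n}. \<not> (\<exists>Ob r s. \<sigma> i = Run Ob r s \<and> s \<noteq> U)"
    using assms(4) vs unfolding final_states_def by blast
  show ?thesis
  proof (cases "\<exists>i\<in>{1..n}. \<exists>Ob. \<sigma> i = Init Ob")
    case True
    then obtain i Ob where i: "i \<in> {1..n}" "\<sigma> i = Init Ob" by blast
    define st where "st = Run Ob 0 (if Ob = {} then Mu else U)"
    have "comp_step n i LInit \<sigma> None = Some (\<sigma>(i := st), None)"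
      using i cons by (simp add: comp_step_def st_def)
    then have "valid_transition n i LInit \<sigma> (\<sigma>(i := st))"
      unfolding valid_transition_def using vs by blast
    moreover have "round ((\<sigma>(i := st)) i) > round (\<sigma> i)" using i by (simp add: st_def)
    ultimately show ?thesis by blast
  next
    case False
    have allrun: "\<exists>Ob r s. \<sigma> i = Run Ob r s" if "i \<in> {1..n}" for i
      using False that by (cases "\<sigma> i") auto
    define rnd where "rnd = (\<lambda>i. case \<sigma> i of Run Ob r s \<Rightarrow> r | Init Ob \<Rightarrow> 0)"
    define Q where "Q = (\<lambda>i. i \<in> {1..n} \<and> (\<exists>Ob r. \<sigma> i = Run Ob r U))"
    obtain i0 where "Q i0" using nf allrun unfolding Q_def by blast
    then obtain i where Qi: "Q i" and mini: "\<And>y. Q y \<Longrightarrow> rnd i \<le> rnd y"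
      using ex_has_least_nat[of Q i0 rnd] by blast
    then obtain Ob r where i: "i \<in> {1..n}" "\<sigma> i = Run Ob r U" unfolding Q_def by blast
    have "obs (\<sigma> i) = M - {i}" using I i(1) unfolding invm_def by blast
    then have Ob: "Ob = M - {i}" using i(2) by simp
    have Pi: "P M i r U" using I i unfolding invm_def by blast
    have "M - {i} \<noteq> {}"
    proof
      assume "M - {i} = {}"
      then have "M = {i}" using Mne by auto
      then show False using Pi by (simp add: P_def)
    qed
    then obtain j where j: "j \<in> M" "j \<noteq> i" by blast
    have j1: "j \<in> {1..n}" using j Msub by blast
    obtain Obj rj sj where sj: "\<sigma> j = Run Obj rj sj" using allrun[OF j1] by blast
    have Pj: "P M j rj sj" using I j1 sj unfolding invm_def by blast
    have le: "sj = U \<longrightarrow> r \<le> rj"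
    proof
      assume "sj = U"
      then have "Q j" using j1 sj unfolding Q_def by blast
      from mini[OF this] show "r \<le> rj" using i sj by (simp add: rnd_def)
    qed
    obtain st where st: "recv (M - {i}) r U (j, rj, sj) = Some st" "round st > int r"
      using recv_prog[OF fin j Pi Pj le] by blast
    have "child_step i LReceive (\<sigma> i) (Some (j, rj, sj)) = Some (st, None)"
      using i(2) st(1) Ob by (simp del: recv.simps)
    then have "comp_step n i LReceive \<sigma> (Some (j, rj, sj)) = Some (\<sigma>(i := st), None)"
      using i(1) j1 sj by (simp add: comp_step_def is_msg_def del: recv.simps)
    moreover have "valid_msg n (j, rj, sj)" using emit_valid[OF assms(2) j1 sj] .
    ultimately have "valid_transition n i LReceive \<sigma> (\<sigma>(i := st))"
      unfolding valid_transition_def using vs by blast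
    moreover have "round ((\<sigma>(i := st)) i) > round (\<sigma> i)" using i st(2) by simp
    ultimately show ?thesis by blast
  qed
qed

end
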